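(* Let $\mathcal{C}$ be a DC circuit whose elements are ideal DC voltage sources, resistors (with positive finite resistances), capacitors and/or inductors, with arbitrary topology, and suppose $\mathcal{C}$ is in a DC steady state. Let $\mathcal{C}^+$ be the circuit obtained from $\mathcal{C}$ by adding one new link consisting of a resistor with positive resistance between two nodes of $\mathcal{C}$, and suppose $\mathcal{C}^+$ is also in a DC steady state. Let $\mathrm{Loss}'$ and $\mathrm{Loss}$ denote the total steady-state resistive losses $\sum I^2R$ (sum over all resistors) of $\mathcal{C}$ and $\mathcal{C}^+$ respectively. Then $\mathrm{Loss}\ge\mathrm{Loss}'$; that is, the steady-state Loss Cost of the Link $\mathrm{LCL}=\mathrm{Loss}/\mathrm{Loss}'$ satisfies $\mathrm{LCL}\ge1$.
   Context: A circuit is modeled as a finite graph whose nodes are points where two or more circuit elements meet and whose links each carry one element. In a DC steady state, node potentials and branch currents satisfy Kirchhoff's current and voltage laws, each resistor obeys Ohm's law $V=IR$, each voltage source imposes a fixed potential difference across its link, each capacitor carries zero current (acts as an open circuit), and each inductor has zero voltage drop (acts as a short circuit). The Loss Cost of the Link (LCL) is the ratio of the total network resistive loss after adding a link to the total network resistive loss before adding it. *)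

theory Defs
  imports Complex_Main
begin

text \<open>Circuit elements. A link l with endpoints ends l = (u, v) carries current i l
  from u to v; the voltage across it is p u - p v.\<close>
datatype element =
    VSource real
  | is_Resistor: Resistor (res: real)
  | Capacitor                    \<comment> \<open>DC: open circuit, i = 0\<close>
  | Inductor                     \<comment> \<open>DC: short circuit, p u - p v = 0\<close>

definition circuit :: "'n set \<Rightarrow> 'l set \<Rightarrow> ('l \<Rightarrow> 'n \<times> 'n) \<Rightarrow> ('l \<Rightarrow> element) \<Rightarrow> bool" where
  "circuit N L ends el \<longleftrightarrow>
     finite N \<and> finite L \<and>
     (\<forall>l\<in>L. fst (ends l) \<in> N \<and> snd (ends l) \<in> N) \<and>
     (\<forall>l\<in>L. is_Resistor (el l) \<longrightarrow> res (el l) > 0) \<and>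
     (\<forall>v\<in>N. 2 \<le> card {l\<in>L. fst (ends l) = v \<or> snd (ends l) = v})"

text \<open>DC steady state with node potentials p and branch currents i
  (KVL holds automatically since voltages are potential differences).\<close>
definition steady_state :: "'n set \<Rightarrow> 'l set \<Rightarrow> ('l \<Rightarrow> 'n \<times> 'n) \<Rightarrow> ('l \<Rightarrow> element)
    \<Rightarrow> ('n \<Rightarrow> real) \<Rightarrow> ('l \<Rightarrow> real) \<Rightarrow> bool" where
  "steady_state N L ends el p i \<longleftrightarrow>
     (\<forall>v\<in>N. (\<Sum>l\<in>{l\<in>L. fst (ends l) = v}. i l) = (\<Sum>l\<in>{l\<in>L. snd (ends l) = v}. i l)) \<and>
     (\<forall>l\<in>L. (case el l of
         VSource V \<Rightarrow> p (fst (ends l)) - p (snd (ends l)) = V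
       | Resistor R \<Rightarrow> p (fst (ends l)) - p (snd (ends l)) = i l * R
       | Capacitor \<Rightarrow> i l = 0
       | Inductor \<Rightarrow> p (fst (ends l)) - p (snd (ends l)) = 0))"

definition loss :: "'l set \<Rightarrow> ('l \<Rightarrow> element) \<Rightarrow> ('l \<Rightarrow> real) \<Rightarrow> real" where
  "loss L el i = (\<Sum>l\<in>{l\<in>L. is_Resistor (el l)}. (i l)^2 * res (el l))"

text \<open>The circuit with one added link: old links are Some l, the new link is None.\<close>
definition plus_links :: "'l set \<Rightarrow> 'l option set" where
  "plus_links L = insert None (Some ` L)"

definition plus_ends :: "('l \<Rightarrow> 'n \<times> 'n) \<Rightarrow> 'n \<Rightarrow> 'n \<Rightarrow> 'l option \<Rightarrow> 'n \<times> 'n" where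
  "plus_ends ends a b = (\<lambda>x. case x of None \<Rightarrow> (a, b) | Some l \<Rightarrow> ends l)"

definition plus_el :: "('l \<Rightarrow> element) \<Rightarrow> real \<Rightarrow> 'l option \<Rightarrow> element" where
  "plus_el el R0 = (\<lambda>x. case x of None \<Rightarrow> Resistor R0 | Some l \<Rightarrow> el l)"

end

theory Submission
  imports Defs
begin

lemma tellegen:
  fixes i :: "'l \<Rightarrow> real" and q :: "'n \<Rightarrow> real"
  assumes fN: "finite N" and fL: "finite L"
    and ends: "\<forall>l\<in>L. fst (ends l) \<in> N \<and> snd (ends l) \<in> N"
    and kcl: "\<forall>v\<in>N. (\<Sum>l\<in>{l\<in>L. fst (ends l) = v}. i l) = (\<Sum>l\<in>{l\<in>L. snd (ends l) = v}. i l)"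
  shows "(\<Sum>l\<in>L. i l * (q (fst (ends l)) - q (snd (ends l)))) = 0"
proof -
  have A: "(\<Sum>l\<in>L. i l * q (fst (ends l))) = (\<Sum>v\<in>N. q v * (\<Sum>l\<in>{l\<in>L. fst (ends l) = v}. i l))"
  proof -
    have "(\<Sum>l\<in>L. i l * q (fst (ends l))) = (\<Sum>v\<in>N. \<Sum>l\<in>{l\<in>L. fst (ends l) = v}. i l * q (fst (ends l)))"
    proof -
      have img: "(\<lambda>l. fst (ends l)) ` L \<subseteq> N" using ends by auto
      show ?thesis using sum.group[OF fL fN img, of "\<lambda>l. i l * q (fst (ends l))"] by simp
    qed
    also have "\<dots> = (\<Sum>v\<in>N. q v * (\<Sum>l\<in>{l\<in>L. fst (ends l) = v}. i l))"
      by (rule sum.cong) (auto simp: sum_distrib_left mult.commute intro!: sum.cong)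
    finally show ?thesis .
  qed
  have B: "(\<Sum>l\<in>L. i l * q (snd (ends l))) = (\<Sum>v\<in>N. q v * (\<Sum>l\<in>{l\<in>L. snd (ends l) = v}. i l))"
  proof -
    have "(\<Sum>l\<in>L. i l * q (snd (ends l))) = (\<Sum>v\<in>N. \<Sum>l\<in>{l\<in>L. snd (ends l) = v}. i l * q (snd (ends l)))"
    proof -
      have img: "(\<lambda>l. snd (ends l)) ` L \<subseteq> N" using ends by auto
      show ?thesis using sum.group[OF fL fN img, of "\<lambda>l. i l * q (snd (ends l))"] by simp
    qed
    also have "\<dots> = (\<Sum>v\<in>N. q v * (\<Sum>l\<in>{l\<in>L. snd (ends l) = v}. i l))"
      by (rule sum.cong) (auto simp: sum_distrib_left mult.commute intro!: sum.cong)
    finally show ?thesis .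
  qed
  have "(\<Sum>l\<in>L. i l * (q (fst (ends l)) - q (snd (ends l))))
      = (\<Sum>l\<in>L. i l * q (fst (ends l))) - (\<Sum>l\<in>L. i l * q (snd (ends l)))"
    by (simp add: right_diff_distrib sum_subtractf)
  also have "\<dots> = 0" unfolding A B
  proof -
    have "(\<Sum>v\<in>N. q v * (\<Sum>l\<in>{l\<in>L. fst (ends l) = v}. i l)) = (\<Sum>v\<in>N. q v * (\<Sum>l\<in>{l\<in>L. snd (ends l) = v}. i l))"
      by (rule sum.cong) (simp_all add: kcl)
    then show "(\<Sum>v\<in>N. q v * (\<Sum>l\<in>{l\<in>L. fst (ends l) = v}. i l)) - (\<Sum>v\<in>N. q v * (\<Sum>l\<in>{l\<in>L. snd (ends l) = v}. i l)) = 0" by simp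
  qed
  finally show ?thesis .
qed

theorem proposition5:
  fixes N :: "'n set" and L :: "'l set" and ends :: "'l \<Rightarrow> 'n \<times> 'n"
    and el :: "'l \<Rightarrow> element" and a b :: 'n and R0 :: real
    and p p' :: "'n \<Rightarrow> real" and i :: "'l \<Rightarrow> real" and i' :: "'l option \<Rightarrow> real"
  assumes "circuit N L ends el"
    and "a \<in> N" and "b \<in> N" and "a \<noteq> b" and "R0 > 0"
    and "steady_state N L ends el p i"
    and "steady_state N (plus_links L) (plus_ends ends a b) (plus_el el R0) p' i'"
  shows "loss (plus_links L) (plus_el el R0) i' \<ge> loss L el i"
proof -
  note C = assms(1)[unfolded circuit_def]
  have fL: "finite L" and fN: "finite N" using C by auto
  note S = assms(6)[unfolded steady_state_def]
  note S' = assms(7)[unfolded steady_state_def plus_links_def plus_ends_def plus_el_def]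
  define j where "j l = i' (Some l)" for l
  define q where "q v = p' v - p v" for v
  define R where "R = {l\<in>L. is_Resistor (el l)}"
  have fR: "finite R" using fL R_def by auto
  have S'L: "\<forall>l\<in>L. (case el l of
         VSource V \<Rightarrow> p' (fst (ends l)) - p' (snd (ends l)) = V
       | Resistor R \<Rightarrow> p' (fst (ends l)) - p' (snd (ends l)) = j l * R
       | Capacitor \<Rightarrow> j l = 0
       | Inductor \<Rightarrow> p' (fst (ends l)) - p' (snd (ends l)) = 0)"
  proof
    fix l assume "l \<in> L"
    then have "Some l \<in> insert None (Some ` L)" by simp
    from bspec[OF conjunct2[OF S'] this] show "case el l of
         VSource V \<Rightarrow> p' (fst (ends l)) - p' (snd (ends l)) = V
       | Resistor R \<Rightarrow> p' (fst (ends l)) - p' (snd (ends l)) = j l * R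
       | Capacitor \<Rightarrow> j l = 0
       | Inductor \<Rightarrow> p' (fst (ends l)) - p' (snd (ends l)) = 0" by (cases "el l") (simp_all add: j_def)
  qed
  have T: "(\<Sum>l\<in>L. i l * (q (fst (ends l)) - q (snd (ends l)))) = 0"
    using tellegen[OF fN fL] C S by blast
  have nonR: "\<forall>l\<in>L - R. i l * (q (fst (ends l)) - q (snd (ends l))) = 0"
  proof
    fix l assume l: "l \<in> L - R"
    then have h1: "case el l of
         VSource V \<Rightarrow> p (fst (ends l)) - p (snd (ends l)) = V
       | Resistor R \<Rightarrow> p (fst (ends l)) - p (snd (ends l)) = i l * R
       | Capacitor \<Rightarrow> i l = 0
       | Inductor \<Rightarrow> p (fst (ends l)) - p (snd (ends l)) = 0" using S by auto
    from l have h2: "case el l of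
         VSource V \<Rightarrow> p' (fst (ends l)) - p' (snd (ends l)) = V
       | Resistor R \<Rightarrow> p' (fst (ends l)) - p' (snd (ends l)) = j l * R
       | Capacitor \<Rightarrow> j l = 0
       | Inductor \<Rightarrow> p' (fst (ends l)) - p' (snd (ends l)) = 0" using S'L by auto
    from l have "\<not> is_Resistor (el l)" by (auto simp: R_def)
    with h1 h2 show "i l * (q (fst (ends l)) - q (snd (ends l))) = 0"
      by (cases "el l") (auto simp: q_def)
  qed
  have RL: "R \<subseteq> L" by (auto simp: R_def)
  have "(\<Sum>l\<in>L. i l * (q (fst (ends l)) - q (snd (ends l))))
     = (\<Sum>l\<in>R. i l * (q (fst (ends l)) - q (snd (ends l))))"
    by (rule sum.mono_neutral_right[OF fL RL]) (use nonR in blast)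
  also have "\<dots> = (\<Sum>l\<in>R. i l * (j l - i l) * res (el l))"
  proof (rule sum.cong)
    fix l assume l: "l \<in> R"
    then obtain r where r: "el l = Resistor r" by (cases "el l") (auto simp: R_def)
    have "p (fst (ends l)) - p (snd (ends l)) = i l * r" using S l r RL by (auto dest!: bspec[where x=l])
    moreover have "p' (fst (ends l)) - p' (snd (ends l)) = j l * r" using S'L l r RL by (auto dest!: bspec[where x=l])
    ultimately show "i l * (q (fst (ends l)) - q (snd (ends l))) = i l * (j l - i l) * res (el l)"
      by (simp add: q_def r algebra_simps)
  qed simp
  finally have Z: "(\<Sum>l\<in>R. i l * (j l - i l) * res (el l)) = 0" using T by simp
  have pos: "\<forall>l\<in>R. res (el l) > 0" using C by (auto simp: R_def)
  have "loss L el i = (\<Sum>l\<in>R. (i l)^2 * res (el l))" by (simp add: loss_def R_def)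
  also have "\<dots> = (\<Sum>l\<in>R. (i l)^2 * res (el l) + 2 * (i l * (j l - i l) * res (el l)))"
    using Z by (simp add: sum.distrib sum_distrib_left[symmetric])
  also have "\<dots> \<le> (\<Sum>l\<in>R. (j l)^2 * res (el l))"
  proof (rule sum_mono)
    fix l assume "l \<in> R"
    then have "res (el l) > 0" using pos by auto
    moreover have "(j l)^2 * res (el l) - ((i l)^2 * res (el l) + 2 * (i l * (j l - i l) * res (el l)))
        = (j l - i l)^2 * res (el l)" by (simp add: power2_eq_square algebra_simps)
    ultimately show "(i l)^2 * res (el l) + 2 * (i l * (j l - i l) * res (el l)) \<le> (j l)^2 * res (el l)"
      by (smt (verit) mult_nonneg_nonneg zero_le_power2)
  qed
  also have "\<dots> = (\<Sum>x\<in>Some ` R. (i' x)^2 * res (plus_el el R0 x))"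
    by (simp add: sum.reindex j_def plus_el_def)
  also have "\<dots> \<le> (\<Sum>x\<in>insert None (Some ` R). (i' x)^2 * res (plus_el el R0 x))"
    using fR assms(5) by (simp add: plus_el_def)
  also have "insert None (Some ` R) = {x \<in> plus_links L. is_Resistor (plus_el el R0 x)}"
    by (auto simp: plus_links_def plus_el_def R_def)
  also have "(\<Sum>x\<in>\<dots>. (i' x)^2 * res (plus_el el R0 x)) = loss (plus_links L) (plus_el el R0) i'"
    by (simp add: loss_def)
  finally show ?thesis .
qed

end
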